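(* Let $X$ be a second countable locally compact Abelian group containing no nonzero compact subgroups. Let $\xi_1,\xi_2$ be independent identically distributed random variables with values in $X$ and a symmetric distribution $\mu$. Let $\alpha$ be a random variable with a Bernoulli distribution taking the values $0$ and $1$ with probability $\frac12$ each, independent of $(\xi_1,\xi_2)$. Then the following are equivalent: (i) the linear forms $2\alpha\xi_1$ and $\xi_1+\xi_2$ are identically distributed; (ii) there is $x_0\in X$ such that $\mu=\frac12\left(E_{x_0}+E_{-x_0}\right)$.
   Context: A distribution is symmetric if $\mu(B)=\mu(-B)$ for all Borel $B$. $E_x$ denotes the point mass at $x$. *)

theory Defs
  imports "HOL-Probability.Probability"
begin

definition gmul :: "nat \<Rightarrow> 'a::ab_group_add \<Rightarrow> 'a" where
  "gmul n x = (\<Sum>i<n. x)"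

definition is_subgroup :: "'a::ab_group_add set \<Rightarrow> bool" where
  "is_subgroup K \<longleftrightarrow> 0 \<in> K \<and> (\<forall>x\<in>K. \<forall>y\<in>K. x + y \<in> K) \<and> (\<forall>x\<in>K. - x \<in> K)"

definition no_nonzero_compact_subgroups :: "'a::{ab_group_add,topological_space} itself \<Rightarrow> bool" where
  "no_nonzero_compact_subgroups _ \<longleftrightarrow>
     (\<forall>K::'a set. is_subgroup K \<and> compact K \<longrightarrow> K = {0})"

definition symmetric_distr :: "'a::{ab_group_add,topological_space} measure \<Rightarrow> bool" where
  "symmetric_distr \<mu> \<longleftrightarrow> (\<forall>B\<in>sets borel. emeasure \<mu> B = emeasure \<mu> (uminus ` B))"

end

theory Submission
  imports Defs
begin

lemma no2tors:
  fixes x :: "'a::{topological_ab_group_add}"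
  assumes "no_nonzero_compact_subgroups TYPE('a)" "x + x = 0"
  shows "x = 0"
proof -
  have nx: "- x = x" using assms(2) by (metis add_eq_0_iff2)
  have "is_subgroup {0, x}" unfolding is_subgroup_def using assms(2) nx by auto
  moreover have "compact {0, x}" by (rule finite_imp_compact) simp
  ultimately have "{0, x} = {0::'a}" using assms(1) unfolding no_nonzero_compact_subgroups_def by blast
  then show ?thesis by auto
qed

lemma fin_supp:
  fixes N :: "'a::t1_space measure"
  assumes N: "prob_space N" and sN: "sets N = sets borel" and S: "finite S" "measure N S = 1"
    and B: "B \<in> sets borel"
  shows "measure N B = (\<Sum>x\<in>B \<inter> S. measure N {x})"
proof -
  interpret N: prob_space N by fact
  have Ss: "S \<in> sets N" using S sN by (simp add: finite_imp_closed)
  have Bs: "B \<in> sets N" using B sN by simp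
  have "measure N B = measure N (B \<inter> S) + measure N (B - S)"
    using Bs Ss by (metis Diff_Diff_Int Diff_disjoint Int_Diff_Un Int_commute N.finite_measure_Union' sets.Diff sets.Int)
  moreover have "measure N (B - S) = 0"
  proof -
    have "measure N (B - S) \<le> measure N (space N - S)"
      using Bs Ss by (intro N.finite_measure_mono) (auto dest: sets.sets_into_space)
    also have "\<dots> = 0" using N.prob_compl[OF Ss] S by simp
    finally show ?thesis by (simp add: measure_le_0_iff)
  qed
  moreover have "measure N (B \<inter> S) = (\<Sum>x\<in>B \<inter> S. measure N {x})"
    using S sN by (intro measure_eq_sum_singleton) auto
  ultimately show ?thesis by simp
qed

lemma two_pt_int:
  fixes N :: "'a::t1_space measure" and f :: "'a \<Rightarrow> real"
  assumes N: "prob_space N" and sN: "sets N = sets borel"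
    and H: "\<forall>B\<in>sets borel. measure N B = (indicator B a + indicator B b) / 2"
    and f: "\<And>x. f x \<ge> 0"
  shows "(\<integral>\<^sup>+x. ennreal (f x) \<partial>N) = ennreal ((f a + f b) / 2)"
proof -
  interpret N: prob_space N by fact
  have sab: "{a, b} \<in> sets borel" by (simp add: finite_imp_closed)
  have "measure N {a, b} = 1" using H[rule_format, OF sab] by simp
  then have AE: "AE x in N. x \<in> {a, b}" by (rule N.AE_prob_1)
  have sa: "{a} \<in> sets N" "{b} \<in> sets N" using sN by auto
  show ?thesis
  proof (cases "a = b")
    case True
    have "(\<integral>\<^sup>+x. ennreal (f x) \<partial>N) = (\<integral>\<^sup>+x. ennreal (f a) * indicator {a} x \<partial>N)"
      using AE True by (intro nn_integral_cong_AE) (auto elim!: eventually_mono split: split_indicator)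
    also have "\<dots> = ennreal (f a) * emeasure N {a}" using sa by (simp add: nn_integral_cmult_indicator)
    also have "emeasure N {a} = 1" using H True N.emeasure_eq_measure by auto
    finally show ?thesis using True by simp
  next
    case False
    have "(\<integral>\<^sup>+x. ennreal (f x) \<partial>N) = (\<integral>\<^sup>+x. ennreal (f a) * indicator {a} x + ennreal (f b) * indicator {b} x \<partial>N)"
      using AE False by (intro nn_integral_cong_AE) (auto elim!: eventually_mono split: split_indicator)
    also have "\<dots> = ennreal (f a) * emeasure N {a} + ennreal (f b) * emeasure N {b}"
      using sa by (simp add: nn_integral_add nn_integral_cmult_indicator)
    also have "emeasure N {a} = ennreal (1/2)"
    proof -
      have "measure N {a} = 1/2" using H[rule_format, of "{a}"] False by simp
      then show ?thesis by (simp only: N.emeasure_eq_measure)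
    qed
    also have "emeasure N {b} = ennreal (1/2)"
    proof -
      have "measure N {b} = 1/2" using H[rule_format, of "{b}"] False by simp
      then show ?thesis by (simp only: N.emeasure_eq_measure)
    qed
    finally have eq: "(\<integral>\<^sup>+x. ennreal (f x) \<partial>N) = ennreal (f a) * ennreal (1/2) + ennreal (f b) * ennreal (1/2)" .
    have e1: "ennreal (f a * (1/2) + f b * (1/2)) = ennreal (f a * (1/2)) + ennreal (f b * (1/2))"
      by (rule ennreal_plus) (use f in auto)
    have e2: "ennreal (f a * (1/2)) = ennreal (f a) * ennreal (1/2)" by (rule ennreal_mult) (use f in auto)
    have e3: "ennreal (f b * (1/2)) = ennreal (f b) * ennreal (1/2)" by (rule ennreal_mult) (use f in auto)
    have e4: "(f a + f b) / 2 = f a * (1/2) + f b * (1/2)" by simp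
    show ?thesis unfolding eq e4 e1 e2 e3 ..
  qed
qed

theorem theorem4p2:
  fixes M :: "'b measure"
    and \<xi>1 \<xi>2 :: "'b \<Rightarrow> 'a::{topological_ab_group_add, second_countable_topology, t2_space}"
    and \<alpha> :: "'b \<Rightarrow> nat"
    and \<mu> :: "'a measure"
  assumes "prob_space M"
    and "locally_compact_space (euclidean :: 'a topology)"
    and "no_nonzero_compact_subgroups TYPE('a)"
    and "\<xi>1 \<in> borel_measurable M" and "\<xi>2 \<in> borel_measurable M"
    and "\<alpha> \<in> measurable M (count_space UNIV)"
    and "prob_space.indep_var M borel \<xi>1 borel \<xi>2"
    and "prob_space.indep_set M
           (sigma_sets (space M) {(\<lambda>\<omega>. (\<xi>1 \<omega>, \<xi>2 \<omega>)) -` A \<inter> space M | A. A \<in> sets (borel \<Otimes>\<^sub>M borel)})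
           (sigma_sets (space M) {\<alpha> -` A \<inter> space M | A. A \<in> sets (count_space UNIV)})"
    and "distr M borel \<xi>1 = \<mu>" and "distr M borel \<xi>2 = \<mu>"
    and "symmetric_distr \<mu>"
    and "\<forall>\<omega>\<in>space M. \<alpha> \<omega> \<in> {0, 1}"
    and "measure M {\<omega>\<in>space M. \<alpha> \<omega> = 0} = 1/2"
    and "measure M {\<omega>\<in>space M. \<alpha> \<omega> = 1} = 1/2"
  shows "distr M borel (\<lambda>\<omega>. gmul (2 * \<alpha> \<omega>) (\<xi>1 \<omega>)) = distr M borel (\<lambda>\<omega>. \<xi>1 \<omega> + \<xi>2 \<omega>)
     \<longleftrightarrow> (\<exists>x0. \<forall>B\<in>sets borel.
            measure \<mu> B = (measure (return borel x0) B + measure (return borel (- x0)) B) / 2)"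
proof -
  interpret prob_space M by fact
  note [measurable] = assms(4,5,6)
  define Z where "Z = (\<lambda>\<omega>. gmul (2 * \<alpha> \<omega>) (\<xi>1 \<omega>))"
  have pmu: "prob_space \<mu>" using assms(9) prob_space_distr[OF assms(4)] by simp
  interpret mu: prob_space \<mu> by fact
  have smu: "sets \<mu> = sets borel" using assms(9) by auto
  have spmu: "space \<mu> = UNIV" using smu sets_eq_imp_space_eq by fastforce
  have tors: "\<And>x::'a. x + x = 0 \<Longrightarrow> x = 0" using no2tors assms(3) by blast
  have gm: "Z \<omega> = (if \<alpha> \<omega> = 0 then 0 else \<xi>1 \<omega> + \<xi>1 \<omega>)" if "\<omega> \<in> space M" for \<omega>
    using assms(12) that unfolding Z_def gmul_def by (auto simp: numeral_2_eq_2)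
  have ev0: "{\<omega>\<in>space M. \<alpha> \<omega> = 0} \<in> events" by measurable
  have ev1: "{\<omega>\<in>space M. \<alpha> \<omega> = 1} \<in> events" by measurable
  have Zm: "Z \<in> borel_measurable M"
  proof -
    have "(\<lambda>\<omega>. if \<alpha> \<omega> = 0 then 0 else \<xi>1 \<omega> + \<xi>1 \<omega>) \<in> borel_measurable M"
      using ev0 by (intro measurable_If) auto
    then show ?thesis by (rule measurable_cong[THEN iffD1, rotated]) (simp add: gm)
  qed
  have Sm: "(\<lambda>\<omega>. \<xi>1 \<omega> + \<xi>2 \<omega>) \<in> borel_measurable M" by measurable
  have joint: "distr M (borel \<Otimes>\<^sub>M borel) (\<lambda>\<omega>. (\<xi>1 \<omega>, \<xi>2 \<omega>)) = \<mu> \<Otimes>\<^sub>M \<mu>"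
    using assms(7) unfolding indep_var_distribution_eq assms(9,10) by simp
  have pre: "(\<lambda>x. f x) -` B \<in> sets borel" if "f \<in> borel_measurable borel" "B \<in> sets borel"
    for B and f :: "'a \<Rightarrow> 'a"
    using measurable_sets_borel[OF that] by simp
  have LHS: "prob {\<omega>\<in>space M. Z \<omega> \<in> B} = (if 0 \<in> B then 1/2 else 0) + 1/2 * measure \<mu> {x. x + x \<in> B}"
    if B: "B \<in> sets borel" for B
  proof -
    have Bd: "{x. x + x \<in> B} \<in> sets borel" using pre[of "\<lambda>x. x + x" B] B by simp
    define a where "a = {\<omega>\<in>space M. \<xi>1 \<omega> + \<xi>1 \<omega> \<in> B}"
    define A0 where "A0 = {\<omega>\<in>space M. \<alpha> \<omega> = 0 \<and> 0 \<in> B}"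
    have seteq: "{\<omega>\<in>space M. Z \<omega> \<in> B} = A0 \<union> (a \<inter> {\<omega>\<in>space M. \<alpha> \<omega> = 1})"
      using assms(12) unfolding a_def A0_def by (auto simp: gm)
    have aev: "a \<in> events" unfolding a_def using B by measurable
    have A0ev: "A0 \<in> events" unfolding A0_def by measurable
    have pA0: "prob A0 = (if 0 \<in> B then 1/2 else 0)" unfolding A0_def using assms(13) by auto
    have pa: "prob a = measure \<mu> {x. x + x \<in> B}"
    proof -
      have "measure \<mu> {x. x + x \<in> B} = prob (\<xi>1 -` {x. x + x \<in> B} \<inter> space M)"
        unfolding assms(9)[symmetric] using Bd by (intro measure_distr) auto
      then show ?thesis unfolding a_def by (simp add: vimage_def Int_def conj_commute)
    qed
    have ind: "prob (a \<inter> {\<omega>\<in>space M. \<alpha> \<omega> = 1}) = prob a * prob {\<omega>\<in>space M. \<alpha> \<omega> = 1}"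
    proof (rule indep_setD[OF assms(8)])
      show "a \<in> sigma_sets (space M) {(\<lambda>\<omega>. (\<xi>1 \<omega>, \<xi>2 \<omega>)) -` A \<inter> space M | A. A \<in> sets (borel \<Otimes>\<^sub>M borel)}"
      proof (intro sigma_sets.Basic CollectI exI conjI)
        show "{x. x + x \<in> B} \<times> UNIV \<in> sets (borel \<Otimes>\<^sub>M borel)"
          using Bd by (intro pair_measureI) auto
        show "a = (\<lambda>\<omega>. (\<xi>1 \<omega>, \<xi>2 \<omega>)) -` ({x. x + x \<in> B} \<times> UNIV) \<inter> space M"
          unfolding a_def by auto
      qed
      show "{\<omega>\<in>space M. \<alpha> \<omega> = 1} \<in> sigma_sets (space M) {\<alpha> -` A \<inter> space M | A. A \<in> sets (count_space UNIV)}"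
        by (intro sigma_sets.Basic CollectI exI[of _ "{1}"] conjI) auto
    qed
    have "prob {\<omega>\<in>space M. Z \<omega> \<in> B} = prob A0 + prob (a \<inter> {\<omega>\<in>space M. \<alpha> \<omega> = 1})"
      unfolding seteq using aev A0ev ev1
      by (intro finite_measure_Union) (auto simp: A0_def)
    then show ?thesis using ind pa pA0 assms(14) by simp
  qed
  have RHS: "emeasure M {\<omega>\<in>space M. \<xi>1 \<omega> + \<xi>2 \<omega> \<in> B} = (\<integral>\<^sup>+x. emeasure \<mu> {y. x + y \<in> B} \<partial>\<mu>)"
    and RHSm: "(\<lambda>x. emeasure \<mu> {y. x + y \<in> B}) \<in> borel_measurable \<mu>"
    if B: "B \<in> sets borel" for B
  proof -
    define D where "D = (\<lambda>p. fst p + snd p) -` B \<inter> space (borel \<Otimes>\<^sub>M borel :: ('a \<times> 'a) measure)"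
    have Dm: "D \<in> sets (borel \<Otimes>\<^sub>M borel)" unfolding D_def using B by measurable
    have Dm': "D \<in> sets (\<mu> \<Otimes>\<^sub>M \<mu>)" using Dm by (simp only: sets_pair_measure_cong[OF smu smu])
    have "emeasure M {\<omega>\<in>space M. \<xi>1 \<omega> + \<xi>2 \<omega> \<in> B} = emeasure M ((\<lambda>\<omega>. (\<xi>1 \<omega>, \<xi>2 \<omega>)) -` D \<inter> space M)"
      unfolding D_def by (intro arg_cong[where f="emeasure M"]) (auto simp: space_pair_measure)
    also have "\<dots> = emeasure (distr M (borel \<Otimes>\<^sub>M borel) (\<lambda>\<omega>. (\<xi>1 \<omega>, \<xi>2 \<omega>))) D"
      using Dm by (intro emeasure_distr[symmetric]) auto
    also have "\<dots> = emeasure (\<mu> \<Otimes>\<^sub>M \<mu>) D" by (simp add: joint)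
    also have "\<dots> = (\<integral>\<^sup>+x. emeasure \<mu> (Pair x -` D) \<partial>\<mu>)"
      using Dm' by (intro mu.emeasure_pair_measure_alt)
    also have "\<dots> = (\<integral>\<^sup>+x. emeasure \<mu> {y. x + y \<in> B} \<partial>\<mu>)"
      unfolding D_def by (simp add: space_pair_measure vimage_def)
    finally show "emeasure M {\<omega>\<in>space M. \<xi>1 \<omega> + \<xi>2 \<omega> \<in> B} = (\<integral>\<^sup>+x. emeasure \<mu> {y. x + y \<in> B} \<partial>\<mu>)" .
    have "(\<lambda>x. emeasure \<mu> (Pair x -` D)) \<in> borel_measurable \<mu>"
      using Dm' by (intro mu.measurable_emeasure_Pair)
    then show "(\<lambda>x. emeasure \<mu> {y. x + y \<in> B}) \<in> borel_measurable \<mu>"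
      unfolding D_def by (simp add: space_pair_measure vimage_def)
  qed
  have Dsym: "emeasure \<mu> {x} = emeasure \<mu> {-x}" for x
  proof -
    have "emeasure \<mu> {x} = emeasure \<mu> (uminus ` {x})"
      using assms(11)[unfolded symmetric_distr_def, rule_format, of "{x}"] by simp
    then show ?thesis by simp
  qed
  have msym: "measure \<mu> {-x} = measure \<mu> {x}" for x
    using Dsym[of x] by (simp add: measure_def)
  show ?thesis
  proof
    assume eq: "distr M borel (\<lambda>\<omega>. gmul (2 * \<alpha> \<omega>) (\<xi>1 \<omega>)) = distr M borel (\<lambda>\<omega>. \<xi>1 \<omega> + \<xi>2 \<omega>)"
    define h where "h x = measure \<mu> {x}" for x
    define p0 where "p0 = h 0"
    have h0: "0 \<le> h x" "h x \<le> 1" for x unfolding h_def by (simp_all add: mu.prob_le_1)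
    have s0: "{x::'a. x + x \<in> {0}} = {0}" by (auto dest: tors)
    have "emeasure M {\<omega>\<in>space M. Z \<omega> \<in> {0}} = emeasure M {\<omega>\<in>space M. \<xi>1 \<omega> + \<xi>2 \<omega> \<in> {0}}"
    proof -
      have "emeasure (distr M borel Z) {0} = emeasure (distr M borel (\<lambda>\<omega>. \<xi>1 \<omega> + \<xi>2 \<omega>)) {0}"
        using eq unfolding Z_def by simp
      then show ?thesis using Zm Sm by (simp add: emeasure_distr vimage_def Int_def conj_commute)
    qed
    also have "\<dots> = (\<integral>\<^sup>+x. emeasure \<mu> {y. x + y \<in> {0}} \<partial>\<mu>)" by (rule RHS) simp
    also have "\<dots> = (\<integral>\<^sup>+x. ennreal (h x) \<partial>\<mu>)"
    proof (intro nn_integral_cong)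
      fix x :: 'a
      have "{y. x + y \<in> {0}} = {-x}" by (auto simp: add_eq_0_iff)
      then show "emeasure \<mu> {y. x + y \<in> {0}} = ennreal (h x)"
        using Dsym[of x] unfolding h_def by (simp add: mu.emeasure_eq_measure)
    qed
    finally have I: "(\<integral>\<^sup>+x. ennreal (h x) \<partial>\<mu>) = ennreal (1/2 + 1/2 * p0)"
      using LHS[of "{0}"] s0 unfolding p0_def h_def by (simp add: emeasure_eq_measure)
    have hm: "(\<lambda>x. ennreal (h x)) \<in> borel_measurable \<mu>"
    proof -
      have "(\<lambda>x. emeasure \<mu> {y. x + y \<in> {0}}) \<in> borel_measurable \<mu>" by (rule RHSm) simp
      moreover have "emeasure \<mu> {y. x + y \<in> {0}} = ennreal (h x)" for x
      proof -
        have "{y. x + y \<in> {0}} = {-x}" by (auto simp: add_eq_0_iff)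
        then show ?thesis using Dsym[of x] unfolding h_def by (simp add: mu.emeasure_eq_measure)
      qed
      ultimately show ?thesis by simp
    qed
    obtain x0 where x0: "h x0 \<ge> 1/2"
    proof (rule ccontr)
      assume "\<not> thesis"
      then have lt: "h x < 1/2" for x using that not_le by metis
      have "(\<integral>\<^sup>+x. ennreal (h x) \<partial>\<mu>) < (\<integral>\<^sup>+x. ennreal (1/2) \<partial>\<mu>)"
      proof (rule nn_integral_less[OF hm])
        show "(\<integral>\<^sup>+x. ennreal (h x) \<partial>\<mu>) \<noteq> \<infinity>" using I by simp
        show "AE x in \<mu>. ennreal (h x) \<le> ennreal (1/2)"
          using lt by (intro AE_I2 ennreal_leI) (simp add: less_imp_le)
        show "\<not> (AE x in \<mu>. ennreal (1/2) \<le> ennreal (h x))"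
        proof
          assume "AE x in \<mu>. ennreal (1/2) \<le> ennreal (h x)"
          then have "AE x in \<mu>. False"
          proof (rule eventually_mono)
            fix x assume "ennreal (1/2) \<le> ennreal (h x)"
            then have "1/2 \<le> h x" using h0[of x] ennreal_le_iff by blast
            then show False using lt[of x] by simp
          qed
          then show False using mu.AE_False by simp
        qed
      qed simp
      also have "(\<integral>\<^sup>+x. ennreal (1/2) \<partial>\<mu>) = ennreal (1/2)" by (simp add: mu.emeasure_space_1)
      finally have "ennreal (1/2 + 1/2 * p0) < ennreal (1/2)" using I by simp
      then have "1/2 + 1/2 * p0 < 1/2"
        using ennreal_less_iff[of "1/2 + 1/2 * p0" "1/2"] h0[of 0] unfolding p0_def by simp
      then show False using h0[of 0] unfolding p0_def by simp
    qed
    have two: "h x + h y \<le> 1" if "x \<noteq> y" for x y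
    proof -
      have "measure \<mu> {x, y} = h x + h y"
        using that unfolding h_def by (subst measure_eq_sum_singleton) (auto simp: smu)
      then show ?thesis by (metis mu.prob_le_1)
    qed
    have fin: "\<exists>x0. \<forall>B\<in>sets borel. measure \<mu> B = (indicator B x0 + indicator B (- x0)) / 2"
    proof (cases "x0 = 0")
      case False
      have nx: "- x0 \<noteq> x0" using False tors by (metis add_eq_0_iff2)
      have hn: "h (-x0) = h x0" unfolding h_def by (rule msym)
      have hx: "h x0 = 1/2" using two[OF nx] hn x0 by simp
      have S1: "measure \<mu> {x0, -x0} = 1"
        using nx hx hn unfolding h_def by (subst measure_eq_sum_singleton) (auto simp: smu)
      show ?thesis
      proof (intro exI ballI)
        fix B :: "'a set" assume B: "B \<in> sets borel"
        have "measure \<mu> B = (\<Sum>x\<in>B \<inter> {x0, -x0}. measure \<mu> {x})"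
          by (rule fin_supp[OF pmu smu _ S1 B]) simp
        then show "measure \<mu> B = (indicator B x0 + indicator B (- x0)) / 2"
          using nx hx hn unfolding h_def
          by (cases "x0 \<in> B"; cases "-x0 \<in> B") (auto simp: Int_insert_left)
      qed
    next
      case True
      have p0h: "1/2 \<le> p0" using x0 True unfolding p0_def by simp
      have "(\<integral>\<^sup>+x. ennreal (h x) \<partial>\<mu>) \<le> (\<integral>\<^sup>+x. ennreal p0 * indicator {0} x + ennreal (1 - p0) * indicator (UNIV - {0}) x \<partial>\<mu>)"
      proof (intro nn_integral_mono)
        fix x :: 'a show "ennreal (h x) \<le> ennreal p0 * indicator {0} x + ennreal (1 - p0) * indicator (UNIV - {0}) x"
        proof (cases "x = 0")
          case True then show ?thesis unfolding p0_def by simp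
        next
          case False then show ?thesis using two[OF False] unfolding p0_def by (simp add: ennreal_leI)
        qed
      qed
      also have "\<dots> = ennreal p0 * emeasure \<mu> {0} + ennreal (1 - p0) * emeasure \<mu> (UNIV - {0})"
      proof -
        have m0[measurable]: "{0} \<in> sets \<mu>" "UNIV - {0} \<in> sets \<mu>" using smu by auto
        have f1: "(\<lambda>x. ennreal p0 * indicator {0} x) \<in> borel_measurable \<mu>" by measurable
        have f2: "(\<lambda>x. ennreal (1 - p0) * indicator (UNIV - {0}) x) \<in> borel_measurable \<mu>" by measurable
        show ?thesis
          by (simp only: nn_integral_add[OF f1 f2] nn_integral_cmult_indicator[OF m0(1)] nn_integral_cmult_indicator[OF m0(2)])
      qed
      also have "emeasure \<mu> {0} = ennreal p0" unfolding p0_def h_def by (simp add: mu.emeasure_eq_measure)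
      also have "emeasure \<mu> (UNIV - {0}) = ennreal (1 - p0)"
        using mu.prob_compl[of "{0}"] spmu unfolding p0_def h_def by (simp add: mu.emeasure_eq_measure smu)
      also have "ennreal p0 * ennreal p0 + ennreal (1 - p0) * ennreal (1 - p0) = ennreal (p0 * p0 + (1 - p0) * (1 - p0))"
      proof -
        have a0: "0 \<le> p0" "0 \<le> 1 - p0" using h0[of 0] unfolding p0_def by auto
        have "ennreal (p0 * p0 + (1 - p0) * (1 - p0)) = ennreal (p0 * p0) + ennreal ((1 - p0) * (1 - p0))"
          by (rule ennreal_plus) (use a0 in auto)
        also have "ennreal (p0 * p0) = ennreal p0 * ennreal p0" by (rule ennreal_mult) (use a0 in auto)
        also have "ennreal ((1 - p0) * (1 - p0)) = ennreal (1 - p0) * ennreal (1 - p0)" by (rule ennreal_mult) (use a0 in auto)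
        finally show ?thesis by simp
      qed
      finally have le: "(\<integral>\<^sup>+x. ennreal (h x) \<partial>\<mu>) \<le> ennreal (p0 * p0 + (1 - p0) * (1 - p0))" .
      have "ennreal (1/2 + 1/2 * p0) \<le> ennreal (p0 * p0 + (1 - p0) * (1 - p0))" using le unfolding I .
      then have "1/2 + 1/2 * p0 \<le> p0 * p0 + (1 - p0) * (1 - p0)"
        by (subst (asm) ennreal_le_iff) (use h0[of 0] in \<open>auto simp: p0_def\<close>)
      then have "0 \<le> (4 * p0 - 1) * (p0 - 1)" by (simp add: algebra_simps)
      then have p1: "p0 = 1" using p0h h0[of 0] unfolding p0_def by (auto simp: zero_le_mult_iff)
      show ?thesis
      proof (intro exI ballI)
        fix B :: "'a set" assume B: "B \<in> sets borel"
        have "measure \<mu> B = (\<Sum>x\<in>B \<inter> {0}. measure \<mu> {x})"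
          by (rule fin_supp[OF pmu smu _ _ B]) (use p1 in \<open>auto simp: p0_def h_def\<close>)
        then show "measure \<mu> B = (indicator B 0 + indicator B (- 0)) / 2"
          using p1 unfolding p0_def h_def by (cases "0 \<in> B") auto
      qed
    qed
    then show "\<exists>x0. \<forall>B\<in>sets borel.
            measure \<mu> B = (measure (return borel x0) B + measure (return borel (- x0)) B) / 2"
      by (simp add: measure_return)
  next
    assume "\<exists>x0. \<forall>B\<in>sets borel.
            measure \<mu> B = (measure (return borel x0) B + measure (return borel (- x0)) B) / 2"
    then obtain x0 where H: "\<forall>B\<in>sets borel. measure \<mu> B = (indicator B x0 + indicator B (- x0)) / 2"
      by (auto simp: measure_return)
    show "distr M borel (\<lambda>\<omega>. gmul (2 * \<alpha> \<omega>) (\<xi>1 \<omega>)) = distr M borel (\<lambda>\<omega>. \<xi>1 \<omega> + \<xi>2 \<omega>)"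
      unfolding Z_def[symmetric]
    proof (rule measure_eqI)
      fix B assume "B \<in> sets (distr M borel Z)"
      then have B: "B \<in> sets borel" by simp
      define g where "g x = measure \<mu> {y. x + y \<in> B}" for x
      have gB: "{y. x + y \<in> B} \<in> sets borel" for x using pre[of "\<lambda>y. x + y" B] B by simp
      have gf: "g x = (indicator B (x + x0) + indicator B (x + - x0)) / 2" for x
        using H gB[of x] unfolding g_def by (auto split: split_indicator)
      have dB: "{x. x + x \<in> B} \<in> sets borel" using pre[of "\<lambda>x. x + x" B] B by simp
      have dd: "measure \<mu> {x. x + x \<in> B} = (indicator B (x0 + x0) + indicator B (- x0 + - x0)) / 2"
        using H dB by (auto split: split_indicator)
      have "emeasure (distr M borel Z) B = emeasure M {\<omega>\<in>space M. Z \<omega> \<in> B}"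
        using Zm B by (simp add: emeasure_distr vimage_def Int_def conj_commute)
      also have "\<dots> = ennreal ((if 0 \<in> B then 1/2 else 0) + 1/2 * measure \<mu> {x. x + x \<in> B})"
        using LHS[OF B] by (simp add: emeasure_eq_measure)
      also have "(if 0 \<in> B then 1/2 else 0) + 1/2 * measure \<mu> {x. x + x \<in> B} = (g x0 + g (- x0)) / 2"
        unfolding gf dd by (auto split: split_indicator)
      also have "\<dots> = (\<integral>\<^sup>+x. ennreal (g x) \<partial>\<mu>)"
        by (rule two_pt_int[OF pmu smu H, symmetric]) (simp add: g_def)
      also have "\<dots> = (\<integral>\<^sup>+x. emeasure \<mu> {y. x + y \<in> B} \<partial>\<mu>)"
        unfolding g_def by (simp add: mu.emeasure_eq_measure)
      also have "\<dots> = emeasure M {\<omega>\<in>space M. \<xi>1 \<omega> + \<xi>2 \<omega> \<in> B}" by (rule RHS[OF B, symmetric])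
      also have "\<dots> = emeasure (distr M borel (\<lambda>\<omega>. \<xi>1 \<omega> + \<xi>2 \<omega>)) B"
        using Sm B by (simp add: emeasure_distr vimage_def Int_def conj_commute)
      finally show "emeasure (distr M borel Z) B = emeasure (distr M borel (\<lambda>\<omega>. \<xi>1 \<omega> + \<xi>2 \<omega>)) B" .
    qed simp
  qed
qed

end
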